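(* Let $n\geq 2$ and let $[n]=U\sqcup A$ be a partition with $U=\{i_1<i_2<\cdots<i_L\}$ nonempty. Let $\bar x_1,\dots,\bar x_n,\bar y_1,\dots,\bar y_n\in\mathbb{R}^3$ be given. Consider the problem \[ \min \sum_{i=1}^{n-1} \left(\|x_i - x_{i+1}\|^2 + \|y_i - y_{i+1}\|^2\right), \] where $(x_i,y_i)=(\bar x_i,\bar y_i)$ is fixed for $i\in U$, and for each $i\in A$ the variable $(x_i,y_i)$ ranges over $\{(\bar x_i,\bar y_i),(\bar y_i,\bar x_i)\}$. Encode a feasible point by signs $s_i\in\{1,-1\}$, where $s_i=1$ if $(x_i,y_i)=(\bar x_i,\bar y_i)$ and $s_i=-1$ if $(x_i,y_i)=(\bar y_i,\bar x_i)$ (so $s_i=1$ for $i\in U$), and set $w_{i,i+1}=(\bar x_i-\bar y_i)^T(\bar x_{i+1}-\bar y_{i+1})$ for $1\le i\le n-1$. Put $i_0:=1$ and $i_{L+1}:=n$. Then an optimal solution $s^*$ of this problem is obtained as follows, where $\operatorname{sgn}$ is the sign function and $\operatorname{sgn}(0)$ may be taken to be either $1$ or $-1$: (1) For the last chunk ($\ell=L$): $s^*_{i_\ell}=1$ and $s^*_{i+1}=\operatorname{sgn}(w_{i,i+1})s^*_i$ for $i=i_\ell,i_\ell+1,\dots,i_{\ell+1}-1$. (2) For the first chunk ($\ell=0$): $s^*_{i_{\ell+1}}=1$ and $s^*_i=\operatorname{sgn}(w_{i,i+1})s^*_{i+1}$ for $i=i_{\ell+1}-1,i_{\ell+1}-2,\dots,i_\ell$.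 (3) For any other chunk ($1\le \ell\le L-1$): let $k$ be an index with $i_\ell\le k\le i_{\ell+1}-1$ minimizing $|w_{k,k+1}|$. Then $s^*_{i_\ell}=1$ and $s^*_{i+1}=\operatorname{sgn}(w_{i,i+1})s^*_i$ for $i=i_\ell,i_\ell+1,\dots,k-1$; and $s^*_{i_{\ell+1}}=1$ and $s^*_i=\operatorname{sgn}(w_{i,i+1})s^*_{i+1}$ for $i=i_{\ell+1}-1,i_{\ell+1}-2,\dots,k+1$.
   Context: This is the symmetry-breaking ("clustering") step for estimated pairs of homologous bead positions $(\bar x_i,\bar y_i)$, $i=1,\dots,n$: pairs indexed by $U$ are unambiguous (fixed order), pairs indexed by $A$ are ambiguous (may be swapped). The $\ell$-th chunk consists of the indices from $i_\ell$ to $i_{\ell+1}$, and the objective splits as a sum over chunks of $\sum_{i=i_\ell}^{i_{\ell+1}-1}\left(\|x_i - x_{i+1}\|^2 + \|y_i - y_{i+1}\|^2\right)$. *)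

theory Defs
  imports "HOL-Analysis.Analysis"
begin

definition conf :: "(nat \<Rightarrow> real^3) \<Rightarrow> (nat \<Rightarrow> real^3) \<Rightarrow> (nat \<Rightarrow> real) \<Rightarrow> nat \<Rightarrow> (real^3) \<times> (real^3)" where
  "conf xb yb s i = (if s i = 1 then (xb i, yb i) else (yb i, xb i))"

definition objective :: "nat \<Rightarrow> (nat \<Rightarrow> real^3) \<Rightarrow> (nat \<Rightarrow> real^3) \<Rightarrow> (nat \<Rightarrow> real) \<Rightarrow> real" where
  "objective n xb yb s =
     (\<Sum>i=1..n-1. (norm (fst (conf xb yb s i) - fst (conf xb yb s (i+1))))\<^sup>2
                 + (norm (snd (conf xb yb s i) - snd (conf xb yb s (i+1))))\<^sup>2)"

definition feasible :: "nat \<Rightarrow> nat set \<Rightarrow> (nat \<Rightarrow> real) \<Rightarrow> bool" where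
  "feasible n U s \<longleftrightarrow> (\<forall>i\<in>{1..n}. s i = 1 \<or> s i = -1) \<and> (\<forall>i\<in>U. s i = 1)"

definition wgt :: "(nat \<Rightarrow> real^3) \<Rightarrow> (nat \<Rightarrow> real^3) \<Rightarrow> nat \<Rightarrow> real" where
  "wgt xb yb i = (xb i - yb i) \<bullet> (xb (i+1) - yb (i+1))"

definition ipt :: "nat \<Rightarrow> nat set \<Rightarrow> nat \<Rightarrow> nat" where
  "ipt n U l = (if l = 0 then 1 else if l = card U + 1 then n
                else sorted_list_of_set U ! (l - 1))"

text \<open>b = sgn(w) * a, where sgn(0) may be chosen as 1 or -1 (independently at each use).\<close>
definition sgn_step :: "real \<Rightarrow> real \<Rightarrow> real \<Rightarrow> bool" where
  "sgn_step w a b \<longleftrightarrow> (\<exists>\<sigma>\<in>{1,-1::real}. (w \<noteq> 0 \<longrightarrow> \<sigma> = sgn w) \<and> b = \<sigma> * a)"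

end

theory Submission
  imports Defs
begin

lemma sgn_fwd:
  assumes "sgn_step w a b" "a \<in> {1,-1}"
  shows "a * b * w = \<bar>w\<bar> \<and> b \<in> {1,-1}"
proof -
  obtain \<sigma> where s: "\<sigma> \<in> {1,-1::real}" "w \<noteq> 0 \<longrightarrow> \<sigma> = sgn w" "b = \<sigma> * a"
    using assms(1) unfolding sgn_step_def by blast
  have "\<sigma> * w = \<bar>w\<bar>" using s(1,2) by (cases "w = 0") (auto simp: sgn_if abs_if)
  then show ?thesis using s assms(2) by auto
qed

lemma sgn_bwd:
  assumes "sgn_step w b a" "b \<in> {1,-1}"
  shows "a * b * w = \<bar>w\<bar> \<and> a \<in> {1,-1}"
  using sgn_fwd[OF assms] by (simp add: mult.commute)

lemma fwd_pm:
  fixes s w :: "nat \<Rightarrow> real" and a c j :: nat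
  assumes "s a \<in> {1,-1}" "\<forall>i. a \<le> i \<and> i < c \<longrightarrow> sgn_step (w i) (s i) (s (i+1))"
    "a \<le> j" "j \<le> c"
  shows "s j \<in> {1,-1}"
  using assms(3,4)
proof (induction j)
  case 0 then show ?case using assms(1) by auto
next
  case (Suc j)
  show ?case
  proof (cases "a = Suc j")
    case True then show ?thesis using assms(1) by simp
  next
    case False
    then have "a \<le> j" "j < c" using Suc.prems by auto
    then show ?thesis using Suc.IH assms(2) sgn_fwd by (metis Suc_eq_plus1 less_imp_le)
  qed
qed

lemma bwd_pm:
  fixes s w :: "nat \<Rightarrow> real" and b c j :: nat
  assumes "s b \<in> {1,-1}" "\<forall>i. c \<le> i \<and> i < b \<longrightarrow> sgn_step (w i) (s (i+1)) (s i)"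
    "c \<le> j" "j \<le> b"
  shows "s j \<in> {1,-1}"
  using assms(4)
proof (induction j rule: inc_induct)
  case base then show ?case using assms(1) by simp
next
  case (step m)
  then show ?case using assms(2,3) sgn_bwd by (metis Suc_eq_plus1 order_trans)
qed

lemma const_prop:
  fixes r :: "nat \<Rightarrow> real"
  assumes "\<forall>j. a \<le> j \<and> j < c \<longrightarrow> r j = r (Suc j)" "a \<le> m" "m \<le> c"
  shows "r m = r a"
  using assms(2,3)
proof (induction m)
  case 0 then show ?case by simp
next
  case (Suc m)
  show ?case
  proof (cases "a = Suc m")
    case False
    then have "a \<le> m" "m < c" using Suc.prems by auto
    then show ?thesis using Suc.IH assms(1) by auto
  qed simp
qed

lemma fwd_chunk:
  fixes s t W :: "nat \<Rightarrow> real"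
  assumes "\<forall>i. a \<le> i \<and> i \<le> b \<longrightarrow> s i \<in> {1,-1}" "\<forall>i. a \<le> i \<and> i \<le> b \<longrightarrow> t i \<in> {1,-1}"
    "\<forall>i. a \<le> i \<and> i < b \<longrightarrow> sgn_step (W i) (s i) (s (i+1))"
  shows "0 \<le> (\<Sum>i\<in>{a..<b}. s i * s (i+1) * W i - t i * t (i+1) * W i)"
proof (rule sum_nonneg)
  fix i assume i: "i \<in> {a..<b}"
  have "s i * s (i+1) * W i = \<bar>W i\<bar>" using sgn_fwd assms(1,3) i by auto
  moreover have "t i * t (i+1) * W i \<le> \<bar>W i\<bar>" using assms(2)[rule_format, of i] assms(2)[rule_format, of "i+1"] i
    by auto
  ultimately show "0 \<le> s i * s (i+1) * W i - t i * t (i+1) * W i" by simp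
qed

lemma bwd_chunk:
  fixes s t W :: "nat \<Rightarrow> real"
  assumes "\<forall>i. a \<le> i \<and> i \<le> b \<longrightarrow> s i \<in> {1,-1}" "\<forall>i. a \<le> i \<and> i \<le> b \<longrightarrow> t i \<in> {1,-1}"
    "\<forall>i. a \<le> i \<and> i < b \<longrightarrow> sgn_step (W i) (s (i+1)) (s i)"
  shows "0 \<le> (\<Sum>i\<in>{a..<b}. s i * s (i+1) * W i - t i * t (i+1) * W i)"
proof (rule sum_nonneg)
  fix i assume i: "i \<in> {a..<b}"
  have "s i * s (i+1) * W i = \<bar>W i\<bar>" using sgn_bwd assms(1,3) i by auto
  moreover have "t i * t (i+1) * W i \<le> \<bar>W i\<bar>" using assms(2)[rule_format, of i] assms(2)[rule_format, of "i+1"] i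
    by auto
  ultimately show "0 \<le> s i * s (i+1) * W i - t i * t (i+1) * W i" by simp
qed

lemma mid_chunk:
  fixes s t W :: "nat \<Rightarrow> real" and a b k :: nat
  assumes ak: "a \<le> k" and kb: "k < b"
    and kmin: "\<forall>j. a \<le> j \<and> j < b \<longrightarrow> \<bar>W k\<bar> \<le> \<bar>W j\<bar>"
    and sa: "s a = 1" and sb: "s b = 1" and ta: "t a = 1" and tb: "t b = 1"
    and spm: "\<forall>i. a \<le> i \<and> i \<le> b \<longrightarrow> s i \<in> {1,-1}"
    and tpm: "\<forall>i. a \<le> i \<and> i \<le> b \<longrightarrow> t i \<in> {1,-1}"
    and fw: "\<forall>i. a \<le> i \<and> i < k \<longrightarrow> sgn_step (W i) (s i) (s (i+1))"
    and bw: "\<forall>i. k+1 \<le> i \<and> i < b \<longrightarrow> sgn_step (W i) (s (i+1)) (s i)"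
  shows "0 \<le> (\<Sum>i\<in>{a..<b}. s i * s (i+1) * W i - t i * t (i+1) * W i)"
proof -
  define D where "D i = s i * s (i+1) * W i - t i * t (i+1) * W i" for i
  have Pj: "s j * s (j+1) * W j = \<bar>W j\<bar>" if "a \<le> j" "j < b" "j \<noteq> k" for j
  proof (cases "j < k")
    case True then show ?thesis using sgn_fwd fw spm that by auto
  next
    case False then have "k+1 \<le> j" using that by auto
    then show ?thesis using sgn_bwd bw spm that by auto
  qed
  have Dj: "D j = 0 \<or> D j = 2 * \<bar>W j\<bar>" if "a \<le> j" "j < b" "j \<noteq> k" for j
  proof -
    have "t j \<in> {1,-1}" "t (j+1) \<in> {1,-1}" using tpm that by auto
    then show ?thesis using Pj[OF that] unfolding D_def by (auto simp: abs_if)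
  qed
  have Dk: "D k \<ge> - 2 * \<bar>W k\<bar>"
  proof -
    have "t k \<in> {1,-1}" "t (k+1) \<in> {1,-1}" "s k \<in> {1,-1}" "s (k+1) \<in> {1,-1}"
      using tpm spm ak kb by auto
    then show ?thesis unfolding D_def by (auto simp: abs_if)
  qed
  have fin: "finite {a..<b}" by simp
  have kin: "k \<in> {a..<b}" using ak kb by simp
  have split: "sum D {a..<b} = D k + sum D ({a..<b} - {k})"
    using sum.remove[OF fin kin] .
  have restnn: "\<forall>j\<in>{a..<b} - {k}. 0 \<le> D j"
  proof
    fix j assume "j \<in> {a..<b} - {k}"
    then show "0 \<le> D j" using Dj[of j] by auto
  qed
  show ?thesis
  proof (cases "0 \<le> D k")
    case True
    then show ?thesis using split restnn sum_nonneg unfolding D_def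
      by (metis (no_types, lifting) add_nonneg_nonneg)
  next
    case Dkneg: False
    show ?thesis
    proof (cases "\<exists>j\<in>{a..<b} - {k}. D j = 2 * \<bar>W j\<bar> \<and> W j \<noteq> 0")
      case True
      then obtain j where j: "j \<in> {a..<b} - {k}" "D j = 2 * \<bar>W j\<bar>" by blast
      have "D j \<le> sum D ({a..<b} - {k})"
        using member_le_sum[of j "{a..<b} - {k}" D] j(1) restnn by auto
      moreover have "\<bar>W k\<bar> \<le> \<bar>W j\<bar>" using kmin j(1) by auto
      ultimately have "sum D {a..<b} \<ge> 0" using split Dk j(2) by linarith
      then show ?thesis unfolding D_def by simp
    next
      case False
      define r where "r i = s i * t i" for i
      have rpm: "r i \<in> {1,-1}" if "a \<le> i" "i \<le> b" for i
      proof -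
        have "s i \<in> {1,-1}" "t i \<in> {1,-1}" using spm tpm that by auto
        then show ?thesis unfolding r_def by auto
      qed
      have req: "r j = r (Suc j)" if "a \<le> j" "j < b" "j \<noteq> k" for j
      proof -
        have "D j = 0 \<or> W j = 0" using False Dj[OF that] that by auto
        moreover have "W j \<noteq> 0"
        proof
          assume "W j = 0"
          then have "W k = 0" using kmin that by force
          then show False using Dkneg unfolding D_def by simp
        qed
        ultimately have "D j = 0" by simp
        then have e: "s j * s (j+1) * W j = t j * t (j+1) * W j" unfolding D_def by simp
        have "s j * s (j+1) = t j * t (j+1)" using e \<open>W j \<noteq> 0\<close> by simp
        moreover have "s j \<in> {1,-1}" "s (j+1) \<in> {1,-1}" "t j \<in> {1,-1}" "t (j+1) \<in> {1,-1}"
          using spm tpm that by auto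
        ultimately show ?thesis unfolding r_def by auto
      qed
      have rk: "r k = r a"
        using const_prop[of a k r k] req ak kb by auto
      have rk1: "r (Suc k) = r b"
      proof -
        have "\<forall>j. Suc k \<le> j \<and> j < b \<longrightarrow> r j = r (Suc j)" using req ak by auto
        then show ?thesis using const_prop[of "Suc k" b r b] kb by auto
      qed
      have "r k = 1" using rk sa ta unfolding r_def by simp
      moreover have "r (Suc k) = 1" using rk1 sb tb unfolding r_def by simp
      moreover have "s k \<in> {1,-1}" "s (k+1) \<in> {1,-1}" "t k \<in> {1,-1}" "t (k+1) \<in> {1,-1}"
        using spm tpm ak kb by auto
      ultimately have "s k * s (k+1) = t k * t (k+1)" unfolding r_def by auto
      then have "D k = 0" unfolding D_def by simp
      then show ?thesis using Dkneg by simp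
    qed
  qed
qed

definition Kc :: "(nat \<Rightarrow> real^3) \<Rightarrow> (nat \<Rightarrow> real^3) \<Rightarrow> nat \<Rightarrow> real" where
  "Kc xb yb i = xb i \<bullet> xb i + yb i \<bullet> yb i + xb (i+1) \<bullet> xb (i+1) + yb (i+1) \<bullet> yb (i+1)
     - (xb i \<bullet> xb (i+1) + yb i \<bullet> yb (i+1) + xb i \<bullet> yb (i+1) + yb i \<bullet> xb (i+1))"

lemma edge:
  assumes "s i \<in> {1,-1}" "s (i+1) \<in> {1,-1}"
  shows "(norm (fst (conf xb yb s i) - fst (conf xb yb s (i+1))))\<^sup>2
       + (norm (snd (conf xb yb s i) - snd (conf xb yb s (i+1))))\<^sup>2
       = Kc xb yb i - s i * s (i+1) * wgt xb yb i"
  using assms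
  by (auto simp: conf_def Kc_def wgt_def power2_norm_eq_inner inner_diff_left inner_diff_right
      inner_commute[of "yb (Suc i)" "xb i"] inner_commute[of "yb i" "xb i"] inner_commute[of "yb (Suc i)" "xb (Suc i)"]
      inner_commute[of "xb (Suc i)" "yb i"] inner_commute[of "xb (Suc i)" "xb i"] inner_commute[of "yb (Suc i)" "yb i"] algebra_simps)

lemma ipt_U:
  assumes "finite U" "1 \<le> l" "l \<le> card U"
  shows "ipt n U l \<in> U"
proof -
  have "ipt n U l = sorted_list_of_set U ! (l-1)" using assms unfolding ipt_def by auto
  moreover have "l - 1 < length (sorted_list_of_set U)" using assms by simp
  ultimately show ?thesis using nth_mem assms(1) by (metis set_sorted_list_of_set)
qed

lemma ipt_lt:
  assumes "finite U" "1 \<le> l" "l < card U"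
  shows "ipt n U l < ipt n U (l+1)"
proof -
  have "ipt n U l = sorted_list_of_set U ! (l-1)" "ipt n U (l+1) = sorted_list_of_set U ! l"
    using assms unfolding ipt_def by auto
  moreover have "l < length (sorted_list_of_set U)" using assms by simp
  moreover have "l - 1 < l" using assms by simp
  ultimately show ?thesis using sorted_wrt_nth_less[OF strict_sorted_list_of_set] by metis
qed

lemma U_ipt:
  assumes "finite U" "i \<in> U"
  shows "\<exists>l. 1 \<le> l \<and> l \<le> card U \<and> ipt n U l = i"
proof -
  have "i \<in> set (sorted_list_of_set U)" using assms by simp
  then obtain j where j: "j < length (sorted_list_of_set U)" "sorted_list_of_set U ! j = i"
    by (metis in_set_conv_nth)
  have "ipt n U (j+1) = i" using j assms unfolding ipt_def by auto
  then show ?thesis using j assms by (intro exI[of _ "j+1"]) auto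
qed

lemma ipt_range:
  assumes "U \<subseteq> {1..n}" "U \<noteq> {}" "n \<ge> 2" "l \<le> card U + 1"
  shows "1 \<le> ipt n U l \<and> ipt n U l \<le> n"
proof -
  have fin: "finite U" using assms(1) finite_subset by blast
  show ?thesis
  proof (cases "l = 0 \<or> l = card U + 1")
    case True then show ?thesis using assms unfolding ipt_def by auto
  next
    case False
    then have "ipt n U l \<in> U" using ipt_U[OF fin] assms by auto
    then show ?thesis using assms by auto
  qed
qed

lemma ipt_mono:
  assumes "U \<subseteq> {1..n}" "U \<noteq> {}" "n \<ge> 2" "l \<le> card U"
  shows "ipt n U l \<le> ipt n U (Suc l)"
proof -
  have fin: "finite U" using assms(1) finite_subset by blast
  have L1: "card U \<ge> 1" using fin assms(2) by (simp add: Suc_leI card_gt_0_iff)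
  consider "l = 0" | "l = card U" | "1 \<le> l \<and> l < card U" using assms(4) by linarith
  then show ?thesis
  proof cases
    case 1 then show ?thesis using ipt_range[OF assms(1-3), of 1] L1 by (simp add: ipt_def)
  next
    case 2 then show ?thesis using ipt_range[OF assms(1-3), of l] by (simp add: ipt_def)
  next
    case 3 then show ?thesis using ipt_lt[OF fin, of l n] by simp
  qed
qed

lemma cover:
  fixes f :: "nat \<Rightarrow> nat"
  assumes "\<forall>l\<le>M. f l \<le> f (Suc l)" "f 0 \<le> i" "i \<le> f (Suc M)"
  shows "\<exists>l\<le>M. f l \<le> i \<and> i \<le> f (Suc l)"
  using assms
proof (induction M)
  case 0 then show ?case by auto
next
  case (Suc M)
  show ?case
  proof (cases "i \<le> f (Suc M)")
    case True then show ?thesis using Suc by (metis le_SucI le_Suc_eq)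
  next
    case False then show ?thesis using Suc.prems by (intro exI[of _ "Suc M"]) auto
  qed
qed

lemma decomp:
  fixes f :: "nat \<Rightarrow> nat" and g :: "nat \<Rightarrow> real"
  assumes "\<forall>l<M. f l \<le> f (Suc l)"
  shows "f 0 \<le> f M \<and> sum g {f 0..<f M} = (\<Sum>l<M. sum g {f l..<f (Suc l)})"
  using assms
proof (induction M)
  case 0 then show ?case by simp
next
  case (Suc M)
  then have ih: "f 0 \<le> f M" "sum g {f 0..<f M} = (\<Sum>l<M. sum g {f l..<f (Suc l)})" by auto
  have m: "f M \<le> f (Suc M)" using Suc.prems by auto
  show ?case using ih m sum.atLeastLessThan_concat[of "f 0" "f M" "f (Suc M)" g] by simp
qed

theorem lemma4p1:
  fixes n :: nat and U :: "nat set" and xb yb :: "nat \<Rightarrow> real^3" and s :: "nat \<Rightarrow> real"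
  assumes n2: "n \<ge> 2"
    and U_sub: "U \<subseteq> {1..n}" and U_ne: "U \<noteq> {}"
    and last_chunk:
      "s (ipt n U (card U)) = 1 \<and>
       (\<forall>i. ipt n U (card U) \<le> i \<and> i < ipt n U (card U + 1) \<longrightarrow>
            sgn_step (wgt xb yb i) (s i) (s (i+1)))"
    and first_chunk:
      "s (ipt n U 1) = 1 \<and>
       (\<forall>i. ipt n U 0 \<le> i \<and> i < ipt n U 1 \<longrightarrow>
            sgn_step (wgt xb yb i) (s (i+1)) (s i))"
    and middle_chunks:
      "\<forall>l. 1 \<le> l \<and> l \<le> card U - 1 \<longrightarrow>
         (\<exists>k. ipt n U l \<le> k \<and> k < ipt n U (l+1) \<and>
              (\<forall>j. ipt n U l \<le> j \<and> j < ipt n U (l+1) \<longrightarrow> \<bar>wgt xb yb k\<bar> \<le> \<bar>wgt xb yb j\<bar>) \<and>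
              s (ipt n U l) = 1 \<and>
              (\<forall>i. ipt n U l \<le> i \<and> i < k \<longrightarrow> sgn_step (wgt xb yb i) (s i) (s (i+1))) \<and>
              s (ipt n U (l+1)) = 1 \<and>
              (\<forall>i. k + 1 \<le> i \<and> i < ipt n U (l+1) \<longrightarrow> sgn_step (wgt xb yb i) (s (i+1)) (s i)))"
  shows "feasible n U s \<and> (\<forall>t. feasible n U t \<longrightarrow> objective n xb yb s \<le> objective n xb yb t)"
proof -
  define L where "L = card U"
  define f where "f = ipt n U"
  define W where "W = wgt xb yb"
  have fin: "finite U" using U_sub finite_subset by blast
  have L1: "L \<ge> 1" using fin U_ne unfolding L_def by (simp add: Suc_leI card_gt_0_iff)
  have mono: "\<forall>l\<le>L. f l \<le> f (Suc l)" using ipt_mono[OF U_sub U_ne n2] unfolding f_def L_def by auto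
  have rng: "1 \<le> f l \<and> f l \<le> n" if "l \<le> L + 1" for l
    using ipt_range[OF U_sub U_ne n2] that unfolding f_def L_def by auto
  have f0: "f 0 = 1" and fL: "f (Suc L) = n" unfolding f_def L_def ipt_def by auto
  have inU: "f l \<in> U" if "1 \<le> l" "l \<le> L" for l
    using ipt_U[OF fin] that unfolding f_def L_def by auto
  have s1: "s (f l) = 1" if "1 \<le> l" "l \<le> L" for l
  proof (cases "l = L")
    case True then show ?thesis using last_chunk unfolding f_def L_def by simp
  next
    case False
    then have "l \<le> card U - 1" using that unfolding L_def by simp
    then show ?thesis using middle_chunks that unfolding f_def by blast
  qed
  have chunk_pm: "s i \<in> {1,-1}" if l: "l \<le> L" and i: "f l \<le> i" "i \<le> f (Suc l)" for l i
  proof -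
    consider "l = 0" | "l = L" | "1 \<le> l \<and> l < L" using l L1 by linarith
    then show ?thesis
    proof cases
      case 1
      have "s (f 1) \<in> {1,-1}" using s1 L1 by auto
      then show ?thesis using bwd_pm[of s "f 1" "f 0" W i] first_chunk i 1 unfolding f_def W_def by auto
    next
      case 2
      have "s (f L) \<in> {1,-1}" using s1 L1 by auto
      then show ?thesis using fwd_pm[of s "f L" "f (Suc L)" W i] last_chunk i 2 unfolding f_def W_def L_def by auto
    next
      case 3
      then have "1 \<le> l \<and> l \<le> card U - 1" unfolding L_def by auto
      then obtain k where k: "f l \<le> k" "k < f (l+1)"
        "\<forall>i. f l \<le> i \<and> i < k \<longrightarrow> sgn_step (W i) (s i) (s (i+1))"
        "\<forall>i. k + 1 \<le> i \<and> i < f (l+1) \<longrightarrow> sgn_step (W i) (s (i+1)) (s i)"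
        using middle_chunks unfolding f_def W_def by blast
      have a: "s (f l) \<in> {1,-1}" "s (f (Suc l)) \<in> {1,-1}" using s1 3 by auto
      show ?thesis
      proof (cases "i \<le> k")
        case True then show ?thesis using fwd_pm[of s "f l" k W i] a k i by auto
      next
        case False then show ?thesis using bwd_pm[of s "f (Suc l)" "k+1" W i] a k i by auto
      qed
    qed
  qed
  have spm: "s i \<in> {1,-1}" if "i \<in> {1..n}" for i
  proof -
    have "f 0 \<le> i" "i \<le> f (Suc L)" using that f0 fL by auto
    then obtain l where "l \<le> L" "f l \<le> i" "i \<le> f (Suc l)"
      using cover[OF mono, of i] by blast
    then show ?thesis using chunk_pm by blast
  qed
  have feas: "feasible n U s"
    unfolding feasible_def
  proof
    show "\<forall>i\<in>{1..n}. s i = 1 \<or> s i = -1" using spm by auto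
    show "\<forall>i\<in>U. s i = 1"
    proof
      fix i assume "i \<in> U"
      then obtain l where "1 \<le> l" "l \<le> L" "f l = i" using U_ipt[OF fin] unfolding f_def L_def by blast
      then show "s i = 1" using s1 by auto
    qed
  qed
  have obj: "objective n xb yb u = (\<Sum>i=1..n-1. Kc xb yb i) - (\<Sum>i=1..n-1. u i * u (i+1) * W i)"
    if "\<forall>i\<in>{1..n}. u i \<in> {1,-1}" for u
  proof -
    have "objective n xb yb u = (\<Sum>i=1..n-1. Kc xb yb i - u i * u (i+1) * W i)"
      unfolding objective_def W_def
      by (rule sum.cong) (use that edge in auto)
    then show ?thesis by (simp add: sum_subtractf)
  qed
  have opt: "objective n xb yb s \<le> objective n xb yb t" if ft: "feasible n U t" for t
  proof -
    have tpm: "t i \<in> {1,-1}" if "i \<in> {1..n}" for i using ft that unfolding feasible_def by auto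
    have t1: "t (f l) = 1" if "1 \<le> l" "l \<le> L" for l using ft inU[OF that] unfolding feasible_def by auto
    define D where "D i = s i * s (i+1) * W i - t i * t (i+1) * W i" for i
    have ivl: "{1..n-1} = {f 0..<f (Suc L)}" using f0 fL n2 by auto
    have dec: "sum D {f 0..<f (Suc L)} = (\<Sum>l<Suc L. sum D {f l..<f (Suc l)})"
      using decomp[of "Suc L" f D] mono by auto
    have cnn: "0 \<le> sum D {f l..<f (Suc l)}" if l: "l \<le> L" for l
    proof -
      have sp: "\<forall>i. f l \<le> i \<and> i \<le> f (Suc l) \<longrightarrow> s i \<in> {1,-1}"
        and tp: "\<forall>i. f l \<le> i \<and> i \<le> f (Suc l) \<longrightarrow> t i \<in> {1,-1}"
        using spm tpm rng[of l] rng[of "Suc l"] l by (auto simp del: One_nat_def)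
      consider "l = 0" | "l = L" | "1 \<le> l \<and> l < L" using l L1 by linarith
      then show ?thesis
      proof cases
        case 1
        then show ?thesis using bwd_chunk[OF sp tp] first_chunk unfolding D_def f_def W_def by auto
      next
        case 2
        then show ?thesis using fwd_chunk[OF sp tp] last_chunk unfolding D_def f_def W_def L_def by auto
      next
        case 3
        then have "1 \<le> l \<and> l \<le> card U - 1" unfolding L_def by auto
        then obtain k where k: "f l \<le> k" "k < f (l+1)"
          "\<forall>j. f l \<le> j \<and> j < f (l+1) \<longrightarrow> \<bar>W k\<bar> \<le> \<bar>W j\<bar>"
          "\<forall>i. f l \<le> i \<and> i < k \<longrightarrow> sgn_step (W i) (s i) (s (i+1))"
          "\<forall>i. k + 1 \<le> i \<and> i < f (l+1) \<longrightarrow> sgn_step (W i) (s (i+1)) (s i)"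
          using middle_chunks unfolding f_def W_def by blast
        have "s (f l) = 1" "s (f (Suc l)) = 1" "t (f l) = 1" "t (f (Suc l)) = 1"
          using s1 t1 3 by auto
        then show ?thesis using mid_chunk[of "f l" k "f (Suc l)" W s t] k sp tp unfolding D_def by auto
      qed
    qed
    have "0 \<le> sum D {1..n-1}" unfolding ivl dec by (rule sum_nonneg) (use cnn in auto)
    then have "(\<Sum>i=1..n-1. t i * t (i+1) * W i) \<le> (\<Sum>i=1..n-1. s i * s (i+1) * W i)"
      unfolding D_def by (simp add: sum_subtractf)
    then show ?thesis using obj[of s] obj[of t] spm tpm by auto
  qed
  show ?thesis using feas opt by blast
qed

end
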